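(* Let $V$ be a finite set with weights $\pi:V\to\mathbb{R}_+$, $\pi(V)=1$, and let $v_i\in\mathbb{R}^n$, $i\in V$, satisfy $\sum_{i<j}\pi(i)\pi(j)\|v_i-v_j\|^2=1$. Then one of the following holds: (i) (large core) there is a vector $v$ with $\pi\big(\{i:\|v_i-v\|\le\frac{1}{2\sqrt{10}}\}\big)\ge 1/4$; (ii) (well spread) there is a vector $w$ and a constant $c>0$ such that, setting $u_i=c(v_i-w)$, there is a subset $U\subseteq V$ with $\pi(U)\gtrsim1$, $\|u_i\|\le1$ for all $i\in U$, and $\sum_{i,j\in U}\pi(i)\pi(j)\|u_i-u_j\|^2\gtrsim1$.
   Context: $\pi(A)=\sum_{i\in A}\pi(i)$; $\gtrsim$ hides absolute positive constants. *)

theory Defs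
  imports Complex_Main
begin

text \<open>Euclidean norm on R^n, with vectors represented as functions nat => real
  of which only the coordinates 0..n-1 are relevant.\<close>
definition enorm :: "nat \<Rightarrow> (nat \<Rightarrow> real) \<Rightarrow> real" where
  "enorm n x = sqrt (\<Sum>k<n. (x k)\<^sup>2)"

end

theory Submission
  imports Defs
begin

lemma enorm_nonneg: "enorm n x \<ge> 0"
  unfolding enorm_def by (simp add: sum_nonneg)

lemma enorm_scale: "enorm n (\<lambda>k. c * x k) = \<bar>c\<bar> * enorm n x"
  unfolding enorm_def
  by (simp add: power_mult_distrib sum_distrib_left[symmetric] real_sqrt_mult)

lemma enorm_sym: "enorm n (\<lambda>k. a k - b k) = enorm n (\<lambda>k. b k - a k)"
  unfolding enorm_def by (simp add: power2_commute)

lemma enorm_self: "enorm n (\<lambda>k. a k - a k) = 0"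
  unfolding enorm_def by simp

lemma enorm_shift: "enorm n (\<lambda>k. c * (a k - w k) - c * (b k - w k)) = \<bar>c\<bar> * enorm n (\<lambda>k. a k - b k)"
proof -
  have "(\<lambda>k. c * (a k - w k) - c * (b k - w k)) = (\<lambda>k. c * (a k - b k))"
    by (simp add: algebra_simps)
  then show ?thesis using enorm_scale by simp
qed

lemma double_sum:
  fixes g :: "nat \<Rightarrow> nat \<Rightarrow> real"
  assumes "finite V" and sym: "\<And>i j. g i j = g j i" and diag: "\<And>i. g i i = 0"
  shows "(\<Sum>i\<in>V. \<Sum>j\<in>V. g i j) = 2 * (\<Sum>i\<in>V. \<Sum>j\<in>{j\<in>V. i < j}. g i j)"
proof -
  have split: "\<And>i. (\<Sum>j\<in>V. g i j) = (\<Sum>j\<in>V. if i < j then g i j else 0) + (\<Sum>j\<in>V. if j < i then g i j else 0)"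
  proof -
    fix i
    have "\<And>j. g i j = (if i < j then g i j else 0) + (if j < i then g i j else 0)"
      using diag by (metis add.right_neutral add_0 linorder_neqE_nat less_asym)
    then show "(\<Sum>j\<in>V. g i j) = (\<Sum>j\<in>V. if i < j then g i j else 0) + (\<Sum>j\<in>V. if j < i then g i j else 0)"
      by (simp add: sum.distrib[symmetric])
  qed
  have A: "\<And>i. (\<Sum>j\<in>{j\<in>V. i < j}. g i j) = (\<Sum>j\<in>V. if i < j then g i j else 0)"
    using assms(1) by (simp add: sum.inter_filter)
  have "(\<Sum>i\<in>V. \<Sum>j\<in>V. if j < i then g i j else 0) = (\<Sum>j\<in>V. \<Sum>i\<in>V. if j < i then g i j else 0)"
    by (rule sum.swap)
  also have "\<dots> = (\<Sum>j\<in>V. \<Sum>i\<in>V. if j < i then g j i else 0)"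
    by (intro sum.cong refl) (metis sym)
  finally have B: "(\<Sum>i\<in>V. \<Sum>j\<in>V. if j < i then g i j else 0) = (\<Sum>i\<in>V. \<Sum>j\<in>V. if i < j then g i j else 0)" .
  show ?thesis
    by (simp add: split sum.distrib A B)
qed

theorem mainTheorem11:
  shows "\<exists>C1>0. \<exists>C2>0. \<forall>(V::nat set) (\<pi>::nat \<Rightarrow> real) (n::nat) (v::nat \<Rightarrow> nat \<Rightarrow> real).
    finite V \<and> (\<forall>i\<in>V. \<pi> i \<ge> 0) \<and> (\<Sum>i\<in>V. \<pi> i) = 1 \<and>
    (\<Sum>i\<in>V. \<Sum>j\<in>{j\<in>V. i < j}. \<pi> i * \<pi> j * (enorm n (\<lambda>k. v i k - v j k))\<^sup>2) = 1
    \<longrightarrow>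
    (\<exists>x::nat \<Rightarrow> real.
        (\<Sum>i\<in>{i\<in>V. enorm n (\<lambda>k. v i k - x k) \<le> 1 / (2 * sqrt 10)}. \<pi> i) \<ge> 1/4)
    \<or>
    (\<exists>(w::nat \<Rightarrow> real) (c::real) (U::nat set).
        c > 0 \<and> U \<subseteq> V \<and> (\<Sum>i\<in>U. \<pi> i) \<ge> C1 \<and>
        (\<forall>i\<in>U. enorm n (\<lambda>k. c * (v i k - w k)) \<le> 1) \<and>
        (\<Sum>i\<in>U. \<Sum>j\<in>U. \<pi> i * \<pi> j *
            (enorm n (\<lambda>k. c * (v i k - w k) - c * (v j k - w k)))\<^sup>2) \<ge> C2)"
proof (rule exI[of _ "1/2"], rule conjI, simp, rule exI[of _ "1/1280"], rule conjI, simp, intro allI impI)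
  fix V :: "nat set" and \<pi> :: "nat \<Rightarrow> real" and n :: nat and v :: "nat \<Rightarrow> nat \<Rightarrow> real"
  assume H: "finite V \<and> (\<forall>i\<in>V. \<pi> i \<ge> 0) \<and> (\<Sum>i\<in>V. \<pi> i) = 1 \<and>
    (\<Sum>i\<in>V. \<Sum>j\<in>{j\<in>V. i < j}. \<pi> i * \<pi> j * (enorm n (\<lambda>k. v i k - v j k))\<^sup>2) = 1"
  define d where "d i j = enorm n (\<lambda>k. v i k - v j k)" for i j
  define r :: real where "r = 1 / (2 * sqrt 10)"
  have fin: "finite V" and pos: "\<And>i. i \<in> V \<Longrightarrow> \<pi> i \<ge> 0" and tot: "(\<Sum>i\<in>V. \<pi> i) = 1"
    and S1: "(\<Sum>i\<in>V. \<Sum>j\<in>{j\<in>V. i < j}. \<pi> i * \<pi> j * (d i j)\<^sup>2) = 1"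
    using H by (auto simp: d_def)
  have dsym: "\<And>i j. d i j = d j i" unfolding d_def by (rule enorm_sym)
  have dnn: "\<And>i j. d i j \<ge> 0" unfolding d_def by (rule enorm_nonneg)
  have r2: "r^2 = 1/40" unfolding r_def by (simp add: power_divide power_mult_distrib)
  have rpos: "r > 0" unfolding r_def by simp
  show "(\<exists>x::nat \<Rightarrow> real.
        (\<Sum>i\<in>{i\<in>V. enorm n (\<lambda>k. v i k - x k) \<le> 1 / (2 * sqrt 10)}. \<pi> i) \<ge> 1/4)
    \<or>
    (\<exists>(w::nat \<Rightarrow> real) (c::real) (U::nat set).
        c > 0 \<and> U \<subseteq> V \<and> (\<Sum>i\<in>U. \<pi> i) \<ge> 1/2 \<and>
        (\<forall>i\<in>U. enorm n (\<lambda>k. c * (v i k - w k)) \<le> 1) \<and>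
        (\<Sum>i\<in>U. \<Sum>j\<in>U. \<pi> i * \<pi> j *
            (enorm n (\<lambda>k. c * (v i k - w k) - c * (v j k - w k)))\<^sup>2) \<ge> 1/1280)"
  proof (cases "\<exists>x::nat \<Rightarrow> real.
        (\<Sum>i\<in>{i\<in>V. enorm n (\<lambda>k. v i k - x k) \<le> 1 / (2 * sqrt 10)}. \<pi> i) \<ge> 1/4")
    case True then show ?thesis by (rule disjI1)
  next
    case False
    have nocore: "(\<Sum>j\<in>{j\<in>V. d j i \<le> r}. \<pi> j) < 1/4" for i
    proof -
      have "\<not> ((\<Sum>j\<in>{j\<in>V. enorm n (\<lambda>k. v j k - v i k) \<le> 1 / (2 * sqrt 10)}. \<pi> j) \<ge> 1/4)"
        by (rule contrapos_nn[OF False]) (erule exI)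
      then show ?thesis unfolding d_def r_def by linarith
    qed
    have D: "(\<Sum>i\<in>V. \<Sum>j\<in>V. \<pi> i * \<pi> j * (d i j)\<^sup>2) = 2"
    proof -
      have gs: "\<And>i j. \<pi> i * \<pi> j * (d i j)\<^sup>2 = \<pi> j * \<pi> i * (d j i)\<^sup>2"
        using dsym by (metis mult.commute)
      have gd: "\<And>i. \<pi> i * \<pi> i * (d i i)\<^sup>2 = 0" by (simp add: d_def enorm_def)
      show ?thesis using double_sum[OF fin, of "\<lambda>i j. \<pi> i * \<pi> j * (d i j)\<^sup>2", OF gs gd] S1 by simp
    qed
    define f where "f i = (\<Sum>j\<in>V. \<pi> j * (d i j)\<^sup>2)" for i
    have Vne: "V \<noteq> {}" using tot by auto
    define m where "m = Min (f ` V)"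
    have "m \<in> f ` V" unfolding m_def using fin Vne by simp
    then obtain i0 where i0: "i0 \<in> V" "f i0 = m" by auto
    have fmin: "\<And>i. i \<in> V \<Longrightarrow> f i0 \<le> f i" using i0 fin unfolding m_def by simp
    have "(\<Sum>i\<in>V. \<pi> i * f i) = 2"
      using D by (simp add: f_def sum_distrib_left mult.assoc)
    moreover have "(\<Sum>i\<in>V. \<pi> i * f i0) \<le> (\<Sum>i\<in>V. \<pi> i * f i)"
      by (rule sum_mono) (simp add: fmin pos mult_left_mono)
    moreover have "(\<Sum>i\<in>V. \<pi> i * f i0) = f i0" using tot by (simp add: sum_distrib_right[symmetric])
    ultimately have f2: "f i0 \<le> 2" by linarith
    define U where "U = {j\<in>V. d j i0 \<le> 2}"
    define F where "F = {j\<in>V. \<not> d j i0 \<le> 2}"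
    have VUF: "V = U \<union> F" "U \<inter> F = {}" unfolding U_def F_def by auto
    have "(\<Sum>j\<in>F. \<pi> j * 4) \<le> (\<Sum>j\<in>F. \<pi> j * (d i0 j)\<^sup>2)"
    proof (rule sum_mono)
      fix j assume j: "j \<in> F"
      then have "d i0 j > 2" using dsym[of i0 j] unfolding F_def by auto
      then have "(2::real)^2 < (d i0 j)\<^sup>2" by (intro power_strict_mono) auto
      then have "4 \<le> (d i0 j)\<^sup>2" by simp
      then show "\<pi> j * 4 \<le> \<pi> j * (d i0 j)\<^sup>2" using j pos F_def by (simp add: mult_left_mono)
    qed
    also have "\<dots> \<le> f i0" unfolding f_def
      by (rule sum_mono2) (use fin F_def pos in auto)
    finally have "(\<Sum>j\<in>F. \<pi> j) \<le> 1/2" using f2 by (simp add: sum_distrib_right[symmetric])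
    moreover have "(\<Sum>j\<in>U. \<pi> j) + (\<Sum>j\<in>F. \<pi> j) = 1"
      using tot VUF fin by (metis finite_Un sum.union_disjoint)
    ultimately have piU: "(\<Sum>j\<in>U. \<pi> j) \<ge> 1/2" by linarith
    have finU: "finite U" using fin U_def by simp
    have posU: "\<And>j. j \<in> U \<Longrightarrow> \<pi> j \<ge> 0" using pos U_def by simp
    have inner: "(\<Sum>j\<in>U. \<pi> j * (d i j)\<^sup>2) \<ge> 1/160" if i: "i \<in> U" for i
    proof -
      define B where "B = {j\<in>U. d j i \<le> r}"
      have "(\<Sum>j\<in>B. \<pi> j) \<le> (\<Sum>j\<in>{j\<in>V. d j i \<le> r}. \<pi> j)"
        by (rule sum_mono2) (use fin B_def U_def pos in auto)
      then have pB: "(\<Sum>j\<in>B. \<pi> j) < 1/4" using nocore[of i] by linarith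
      have BU: "B \<subseteq> U" unfolding B_def by auto
      have "(\<Sum>j\<in>U - B. \<pi> j) = (\<Sum>j\<in>U. \<pi> j) - (\<Sum>j\<in>B. \<pi> j)"
        using sum_diff[OF finU BU] .
      then have pUB: "(\<Sum>j\<in>U - B. \<pi> j) \<ge> 1/4" using pB piU by linarith
      have "(\<Sum>j\<in>U - B. \<pi> j * r^2) \<le> (\<Sum>j\<in>U - B. \<pi> j * (d i j)\<^sup>2)"
      proof (rule sum_mono)
        fix j assume j: "j \<in> U - B"
        then have "d i j > r" using dsym[of i j] unfolding B_def by auto
        then have "r^2 \<le> (d i j)\<^sup>2" using rpos by (simp add: power_mono)
        then show "\<pi> j * r^2 \<le> \<pi> j * (d i j)\<^sup>2" using j posU by (simp add: mult_left_mono)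
      qed
      also have "\<dots> \<le> (\<Sum>j\<in>U. \<pi> j * (d i j)\<^sup>2)"
        by (rule sum_mono2) (use finU posU in auto)
      finally have "(\<Sum>j\<in>U - B. \<pi> j) * r^2 \<le> (\<Sum>j\<in>U. \<pi> j * (d i j)\<^sup>2)"
        by (simp add: sum_distrib_right)
      moreover have "(\<Sum>j\<in>U - B. \<pi> j) * r^2 \<ge> 1/4 * (1/40)"
        using pUB unfolding r2 by simp
      ultimately show ?thesis by linarith
    qed
    have "(\<Sum>i\<in>U. \<pi> i * (1/160)) \<le> (\<Sum>i\<in>U. \<pi> i * (\<Sum>j\<in>U. \<pi> j * (d i j)\<^sup>2))"
      by (rule sum_mono) (rule mult_left_mono, rule inner, assumption, rule posU)
    moreover have "(\<Sum>i\<in>U. \<pi> i * (1/160)) \<ge> 1/320"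
    proof -
      have "(\<Sum>i\<in>U. \<pi> i * (1/160)) = (\<Sum>i\<in>U. \<pi> i) * (1/160)"
        by (rule sum_distrib_right[symmetric])
      then show ?thesis using piU by linarith
    qed
    ultimately have big: "(\<Sum>i\<in>U. \<Sum>j\<in>U. \<pi> i * \<pi> j * (d i j)\<^sup>2) \<ge> 1/320"
      by (simp add: sum_distrib_left mult.assoc)
    have eq: "(\<Sum>i\<in>U. \<Sum>j\<in>U. \<pi> i * \<pi> j *
            (enorm n (\<lambda>k. (1/2) * (v i k - v i0 k) - (1/2) * (v j k - v i0 k)))\<^sup>2)
         = (1/4) * (\<Sum>i\<in>U. \<Sum>j\<in>U. \<pi> i * \<pi> j * (d i j)\<^sup>2)"
    proof -
      have pt: "\<And>i j. enorm n (\<lambda>k. (1/2) * (v i k - v i0 k) - (1/2) * (v j k - v i0 k)) = \<bar>1/2::real\<bar> * d i j"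
        unfolding d_def by (rule enorm_shift)
      show ?thesis
        by (simp only: pt) (simp add: sum_distrib_left power_mult_distrib power_divide mult_ac)
    qed
    have UV: "U \<subseteq> V" unfolding U_def by auto
    have cc: "\<forall>i\<in>U. enorm n (\<lambda>k. (1/2::real) * (v i k - v i0 k)) \<le> 1"
    proof
      fix i assume "i \<in> U"
      then have "d i i0 \<le> 2" unfolding U_def by auto
      then show "enorm n (\<lambda>k. (1/2) * (v i k - v i0 k)) \<le> 1"
        using enorm_scale[of n "1/2::real" "\<lambda>k. v i k - v i0 k"] unfolding d_def by simp
    qed
    have ee: "(\<Sum>i\<in>U. \<Sum>j\<in>U. \<pi> i * \<pi> j *
            (enorm n (\<lambda>k. (1/2::real) * (v i k - v i0 k) - (1/2) * (v j k - v i0 k)))\<^sup>2) \<ge> 1/1280"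
      using eq big by linarith
    show ?thesis
      using cc ee piU UV
      by (intro disjI2 exI[of _ "v i0"] exI[of _ "1/2::real"] exI[of _ U]) auto
  qed
qed

end
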